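(* In the two-parallel-path setting with the linear decision rule, suppose $l_v=0$ for all vertices, $m<n$, all initial pheromone levels are positive, $f_s(t)=f_s(0)+\alpha t$ and $b_d(t)=b_d(0)+\alpha t$ with $\alpha>0$ and $f_s(0),b_d(0)>0$, and the initial flows at vertices other than $s,d$ satisfy $f_v(0)\le f_s(0)$, $b_v(0)\le b_d(0)$. Let $T_1=\max_{(u,v)\in E}\log(p_{uv}(0)/(f_s(0)+b_d(0)))/\log(1/\delta)$. Then for every integer $t\ge L+\max(0,T_1)$, $$r_{\min}(t+L)\ \ge\ \left(1+\frac{\alpha(1-\delta)}{6\,(f_s(0)+b_d(0)+2\alpha L+2\alpha t)}\right)r_{\min}(t).$$
   Context: Model (linear decision rule). Directed graph $G=(V,E)$, source $s$, destination $d$, discrete time; pheromone $p_{uv}(t)$, forward flows $f_v(t)$, backward flows $b_v(t)$; leakages $l_v\in[0,1]$; decay $\delta\in(0,1)$; exogenous inputs $f_s(t),b_d(t)$. Edge flows: $f_{uv}(t)=f_u(t)p_{uv}(t)/\sum_{z:(u,z)\in E}p_{uz}(t)$, $b_{uv}(t)=b_v(t)p_{uv}(t)/\sum_{z:(z,v)\in E}p_{zv}(t)$ (at a vertex with a single outgoing, resp. incoming, edge the whole flow goes along it). Updates: $f_v(t+1)=(1-l_v)\sum_{z:(z,v)\in E}f_{zv}(t)$ for $v\neq s$, $b_u(t+1)=(1-l_u)\sum_{z:(u,z)\in E}b_{uz}(t)$ for $u\ne d$, $p_{uv}(t+1)=\delta(p_{uv}(t)+f_{uv}(t)+b_{uv}(t))$.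 Two parallel paths: $G$ is the union of directed paths $P_1,P_2$ from $s$ to $d$ sharing only $s,d$; $s_1,s_2$ are the successors of $s$ and $d_1,d_2$ the predecessors of $d$ on $P_1,P_2$; $m=\mathrm{len}(P_1)$, $n=\mathrm{len}(P_2)$ (numbers of edges), $L=\max(m,n)$. Potential: $r_{ss_1}(t)=p_{ss_1}(t)/p_{ss_2}(t)$, $r_{d_1d}(t)=p_{d_1d}(t)/p_{d_2d}(t)$, and for $t\ge L$, $r_{\min}(t)=\min\{r_{ss_1}(t-i),\,r_{d_1d}(t-i):0\le i\le L-1\}$. *)

theory Defs
  imports Complex_Main
begin

text \<open>General ant-colony (linear decision rule) dynamics on a directed graph with edge set E.
  f t v : forward flow at vertex v at time t; b t v : backward flow; p t u v : pheromone on edge (u,v).\<close>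

definition out_sum :: "('v \<times> 'v) set \<Rightarrow> ('v \<Rightarrow> 'v \<Rightarrow> real) \<Rightarrow> 'v \<Rightarrow> real" where
  "out_sum E q u = (\<Sum>z\<in>{z. (u, z) \<in> E}. q u z)"

definition in_sum :: "('v \<times> 'v) set \<Rightarrow> ('v \<Rightarrow> 'v \<Rightarrow> real) \<Rightarrow> 'v \<Rightarrow> real" where
  "in_sum E q v = (\<Sum>z\<in>{z. (z, v) \<in> E}. q z v)"

definition fwd_edge :: "('v \<times> 'v) set \<Rightarrow> (nat \<Rightarrow> 'v \<Rightarrow> real) \<Rightarrow> (nat \<Rightarrow> 'v \<Rightarrow> 'v \<Rightarrow> real)
    \<Rightarrow> nat \<Rightarrow> 'v \<Rightarrow> 'v \<Rightarrow> real" where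
  "fwd_edge E f p t u v = f t u * p t u v / out_sum E (p t) u"

definition bwd_edge :: "('v \<times> 'v) set \<Rightarrow> (nat \<Rightarrow> 'v \<Rightarrow> real) \<Rightarrow> (nat \<Rightarrow> 'v \<Rightarrow> 'v \<Rightarrow> real)
    \<Rightarrow> nat \<Rightarrow> 'v \<Rightarrow> 'v \<Rightarrow> real" where
  "bwd_edge E b p t u v = b t v * p t u v / in_sum E (p t) v"

text \<open>The update rules (the exogenous inputs f t s and b t d are left unconstrained here).\<close>
definition ant_dynamics :: "('v \<times> 'v) set \<Rightarrow> 'v \<Rightarrow> 'v \<Rightarrow> ('v \<Rightarrow> real) \<Rightarrow> real
    \<Rightarrow> (nat \<Rightarrow> 'v \<Rightarrow> real) \<Rightarrow> (nat \<Rightarrow> 'v \<Rightarrow> real) \<Rightarrow> (nat \<Rightarrow> 'v \<Rightarrow> 'v \<Rightarrow> real) \<Rightarrow> bool" where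
  "ant_dynamics E s d l \<delta> f b p \<longleftrightarrow>
    (\<forall>t.
      (\<forall>v. v \<noteq> s \<longrightarrow> f (Suc t) v = (1 - l v) * (\<Sum>z\<in>{z. (z, v) \<in> E}. fwd_edge E f p t z v)) \<and>
      (\<forall>u. u \<noteq> d \<longrightarrow> b (Suc t) u = (1 - l u) * (\<Sum>z\<in>{z. (u, z) \<in> E}. bwd_edge E b p t u z)) \<and>
      (\<forall>u v. (u, v) \<in> E \<longrightarrow>
         p (Suc t) u v = \<delta> * (p t u v + fwd_edge E f p t u v + bwd_edge E b p t u v)))"

definition path_edges :: "'v list \<Rightarrow> ('v \<times> 'v) set" where
  "path_edges P = set (zip P (tl P))"

definition two_parallel_paths :: "('v \<times> 'v) set \<Rightarrow> 'v \<Rightarrow> 'v \<Rightarrow> 'v list \<Rightarrow> 'v list \<Rightarrow> bool" where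
  "two_parallel_paths E s d P1 P2 \<longleftrightarrow>
     distinct P1 \<and> distinct P2 \<and> length P1 \<ge> 2 \<and> length P2 \<ge> 2 \<and>
     hd P1 = s \<and> last P1 = d \<and> hd P2 = s \<and> last P2 = d \<and>
     set P1 \<inter> set P2 = {s, d} \<and>
     E = path_edges P1 \<union> path_edges P2"

definition plen :: "'v list \<Rightarrow> nat" where "plen P = length P - 1"
definition succ_s :: "'v list \<Rightarrow> 'v" where "succ_s P = P ! 1"
definition pred_d :: "'v list \<Rightarrow> 'v" where "pred_d P = P ! (length P - 2)"

definition r_min :: "(nat \<Rightarrow> 'v \<Rightarrow> 'v \<Rightarrow> real) \<Rightarrow> 'v \<Rightarrow> 'v \<Rightarrow> 'v list \<Rightarrow> 'v list \<Rightarrow> nat \<Rightarrow> real" where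
  "r_min p s d P1 P2 t =
     (let L = max (plen P1) (plen P2) in
      Min ((\<lambda>i. p (t - i) s (succ_s P1) / p (t - i) s (succ_s P2)) ` {..<L} \<union>
           (\<lambda>i. p (t - i) (pred_d P1) d / p (t - i) (pred_d P2) d) ` {..<L}))"

end

theory Submission
  imports Defs
begin


lemma path_edges_iff:
  "(a,b) \<in> path_edges P \<longleftrightarrow> (\<exists>i. Suc i < length P \<and> a = P!i \<and> b = P!Suc i)"
  unfolding path_edges_def set_zip by (auto simp: nth_tl; rule_tac x=i in exI; simp)

lemma tpp_sym: "two_parallel_paths E s d P Q \<Longrightarrow> two_parallel_paths E s d Q P"
  unfolding two_parallel_paths_def by auto

lemma distinct_nth_eq: "distinct xs \<Longrightarrow> i < length xs \<Longrightarrow> j < length xs \<Longrightarrow> xs!i = xs!j \<Longrightarrow> i = j"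
  by (simp add: nth_eq_iff_index_eq)

lemma distinct_nth_neq: "distinct xs \<Longrightarrow> i < length xs \<Longrightarrow> j < length xs \<Longrightarrow> i \<noteq> j \<Longrightarrow> xs!i \<noteq> xs!j"
  by (simp add: nth_eq_iff_index_eq)

context
  fixes E s d P Q
  assumes G: "two_parallel_paths E s d P Q"
begin

lemma tpp_basic: "distinct P" "distinct Q" "length P \<ge> 2" "length Q \<ge> 2"
  "P!0 = s" "Q!0 = s" "P!(length P - 1) = d" "Q!(length Q - 1) = d"
  "set P \<inter> set Q = {s,d}" "E = path_edges P \<union> path_edges Q"
proof -
  have ne: "P \<noteq> []" "Q \<noteq> []" using G by (auto simp: two_parallel_paths_def)
  show "distinct P" "distinct Q" "length P \<ge> 2" "length Q \<ge> 2"
  "P!0 = s" "Q!0 = s" "P!(length P - 1) = d" "Q!(length Q - 1) = d"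
  "set P \<inter> set Q = {s,d}" "E = path_edges P \<union> path_edges Q"
    using G ne unfolding two_parallel_paths_def by (auto simp: hd_conv_nth last_conv_nth)
qed

lemma s_ne_d: "s \<noteq> d"
proof
  assume "s = d"
  hence "P!0 = P!(length P - 1)" using tpp_basic by simp
  moreover have "0 < length P" "length P - 1 < length P" "0 \<noteq> length P - 1"
    using tpp_basic(3) by auto
  ultimately show False using tpp_basic(1) nth_eq_iff_index_eq[of P 0 "length P - 1"] by blast
qed

lemma edge_iff: "(a,b) \<in> E \<longleftrightarrow> (\<exists>i. Suc i < length P \<and> a = P!i \<and> b = P!Suc i)
     \<or> (\<exists>i. Suc i < length Q \<and> a = Q!i \<and> b = Q!Suc i)"
  using tpp_basic(10) by (auto simp: path_edges_iff)

lemma finite_E: "finite E"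
  using tpp_basic(10) by (simp add: path_edges_def)

lemma in_interior:
  assumes "0 < k" "Suc k < length P"
  shows "{z. (z, P!k) \<in> E} = {P!(k-1)}"
proof (rule set_eqI, rule iffI)
  fix z assume "z \<in> {z. (z, P!k) \<in> E}"
  hence "(z, P!k) \<in> E" by simp
  then consider i where "Suc i < length P" "z = P!i" "P!k = P!Suc i"
    | i where "Suc i < length Q" "z = Q!i" "P!k = Q!Suc i"
    using edge_iff by blast
  thus "z \<in> {P!(k-1)}"
  proof cases
    case 1 thus ?thesis using assms tpp_basic(1) by (auto simp: nth_eq_iff_index_eq)
  next
    case 2
    have "P!k \<in> set P" using assms by simp
    moreover have "P!k \<in> set Q" using 2 by (metis Suc_lessD nth_mem)
    ultimately have "P!k \<in> set P \<inter> set Q" by blast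
    hence "P!k = P!0 \<or> P!k = P!(length P - 1)" using tpp_basic by auto
    moreover have "P!k \<noteq> P!0" by (rule distinct_nth_neq[OF tpp_basic(1)]) (use assms in auto)
    moreover have "P!k \<noteq> P!(length P - 1)" by (rule distinct_nth_neq[OF tpp_basic(1)]) (use assms in auto)
    ultimately show ?thesis by blast
  qed
next
  fix z assume "z \<in> {P!(k-1)}"
  thus "z \<in> {z. (z, P!k) \<in> E}" using assms edge_iff
    by (auto intro!: exI[of _ "k-1"])
qed

lemma out_interior:
  assumes "0 < k" "Suc k < length P"
  shows "{z. (P!k, z) \<in> E} = {P!Suc k}"
proof (rule set_eqI, rule iffI)
  fix z assume "z \<in> {z. (P!k, z) \<in> E}"
  hence "(P!k, z) \<in> E" by simp
  then consider i where "Suc i < length P" "P!k = P!i" "z = P!Suc i"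
    | i where "Suc i < length Q" "P!k = Q!i" "z = Q!Suc i"
    using edge_iff by blast
  thus "z \<in> {P!Suc k}"
  proof cases
    case 1 thus ?thesis using assms tpp_basic(1) by (auto simp: nth_eq_iff_index_eq)
  next
    case 2
    have "P!k \<in> set P" using assms by simp
    moreover have "P!k \<in> set Q" using 2 by (metis Suc_lessD nth_mem)
    ultimately have "P!k \<in> set P \<inter> set Q" by blast
    hence "P!k = P!0 \<or> P!k = P!(length P - 1)" using tpp_basic by auto
    moreover have "P!k \<noteq> P!0" by (rule distinct_nth_neq[OF tpp_basic(1)]) (use assms in auto)
    moreover have "P!k \<noteq> P!(length P - 1)" by (rule distinct_nth_neq[OF tpp_basic(1)]) (use assms in auto)
    ultimately show ?thesis by blast
  qed
next
  fix z assume "z \<in> {P!Suc k}"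
  thus "z \<in> {z. (P!k, z) \<in> E}" using assms edge_iff by auto
qed

lemma out_s: "{z. (s, z) \<in> E} = {P!1, Q!1}"
proof (rule set_eqI, rule iffI)
  fix z assume "z \<in> {z. (s, z) \<in> E}"
  hence "(s, z) \<in> E" by simp
  then consider i where "Suc i < length P" "s = P!i" "z = P!Suc i"
    | i where "Suc i < length Q" "s = Q!i" "z = Q!Suc i"
    using edge_iff by blast
  thus "z \<in> {P!1, Q!1}"
  proof cases
    case 1 hence "P!i = P!0" using tpp_basic by simp
    moreover have "i < length P" "0 < length P" using 1 by auto
    ultimately have "i = 0" using distinct_nth_eq[OF tpp_basic(1)] by blast
    thus ?thesis using 1 by simp
  next
    case 2 hence "Q!i = Q!0" using tpp_basic by simp
    moreover have "i < length Q" "0 < length Q" using 2 by auto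
    ultimately have "i = 0" using distinct_nth_eq[OF tpp_basic(2)] by blast
    thus ?thesis using 2 by simp
  qed
next
  fix z assume "z \<in> {P!1, Q!1}"
  thus "z \<in> {z. (s, z) \<in> E}" using edge_iff tpp_basic
    by (auto intro: exI[of _ 0])
qed

lemma in_d: "{z. (z, d) \<in> E} = {P!(length P - 2), Q!(length Q - 2)}"
proof (rule set_eqI, rule iffI)
  fix z assume "z \<in> {z. (z, d) \<in> E}"
  hence "(z, d) \<in> E" by simp
  then consider i where "Suc i < length P" "z = P!i" "d = P!Suc i"
    | i where "Suc i < length Q" "z = Q!i" "d = Q!Suc i"
    using edge_iff by blast
  thus "z \<in> {P!(length P - 2), Q!(length Q - 2)}"
  proof cases
    case 1 hence "P!Suc i = P!(length P - 1)" using tpp_basic by simp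
    moreover have "Suc i < length P" "length P - 1 < length P" using 1 by auto
    ultimately have "Suc i = length P - 1" using distinct_nth_eq[OF tpp_basic(1)] by blast
    hence "i = length P - 2" by linarith
    thus ?thesis using 1 by simp
  next
    case 2 hence "Q!Suc i = Q!(length Q - 1)" using tpp_basic by simp
    moreover have "Suc i < length Q" "length Q - 1 < length Q" using 2 by auto
    ultimately have "Suc i = length Q - 1" using distinct_nth_eq[OF tpp_basic(2)] by blast
    hence "i = length Q - 2" by linarith
    thus ?thesis using 2 by simp
  qed
next
  fix z assume "z \<in> {P!(length P - 2), Q!(length Q - 2)}"
  moreover have "(P!(length P - 2), d) \<in> E"
    using edge_iff tpp_basic by (auto intro!: exI[of _ "length P - 2"]
        simp: numeral_2_eq_2 Suc_diff_Suc)
  moreover have "(Q!(length Q - 2), d) \<in> E"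
    using edge_iff tpp_basic by (auto intro!: exI[of _ "length Q - 2"]
        simp: numeral_2_eq_2 Suc_diff_Suc)
  ultimately show "z \<in> {z. (z, d) \<in> E}" by auto
qed

lemma firsts_ne:
  assumes "length P \<noteq> length Q"
  shows "P!1 \<noteq> Q!1"
proof
  assume eq: "P!1 = Q!1"
  have "P!1 \<in> set P" "Q!1 \<in> set Q" using tpp_basic(3,4) by auto
  hence "P!1 \<in> {s,d}" using eq tpp_basic(9) by auto
  moreover have "P!1 \<noteq> P!0" by (rule distinct_nth_neq[OF tpp_basic(1)]) (use tpp_basic(3) in auto)
  ultimately have "P!1 = P!(length P - 1)" "Q!1 = Q!(length Q - 1)"
    using tpp_basic(5,7,8) eq by auto
  moreover have "1 < length P" "length P - 1 < length P" "1 < length Q" "length Q - 1 < length Q"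
    using tpp_basic(3,4) by auto
  ultimately have "1 = length P - 1" "1 = length Q - 1"
    using distinct_nth_eq[OF tpp_basic(1)] distinct_nth_eq[OF tpp_basic(2)] by blast+
  thus False using assms by simp
qed

lemma lasts_ne:
  assumes "length P \<noteq> length Q"
  shows "P!(length P - 2) \<noteq> Q!(length Q - 2)"
proof
  assume eq: "P!(length P - 2) = Q!(length Q - 2)"
  have "P!(length P - 2) \<in> set P" "Q!(length Q - 2) \<in> set Q" using tpp_basic(3,4) by auto
  hence "P!(length P - 2) \<in> {s,d}" using eq tpp_basic(9) by auto
  moreover have "P!(length P - 2) \<noteq> P!(length P - 1)"
    by (rule distinct_nth_neq[OF tpp_basic(1)]) (use tpp_basic(3) in auto)
  ultimately have "P!(length P - 2) = P!0" "Q!(length Q - 2) = Q!0"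
    using tpp_basic(5,6,7) eq by auto
  moreover have "length P - 2 < length P" "0 < length P" "length Q - 2 < length Q" "0 < length Q"
    using tpp_basic(3,4) by auto
  ultimately have "length P - 2 = 0" "length Q - 2 = 0"
    using distinct_nth_eq[OF tpp_basic(1)] distinct_nth_eq[OF tpp_basic(2)] by blast+
  thus False using assms tpp_basic(3,4) by simp
qed

lemma edge_ends:
  assumes "(u,v) \<in> E"
  shows "u \<in> set P \<union> set Q" "v \<in> set P \<union> set Q" "u \<noteq> d" "v \<noteq> s"
proof -
  have "u \<in> set P \<union> set Q \<and> v \<in> set P \<union> set Q \<and> u \<noteq> d \<and> v \<noteq> s"
  proof -
    from assms consider i where "Suc i < length P" "u = P!i" "v = P!Suc i"
      | i where "Suc i < length Q" "u = Q!i" "v = Q!Suc i"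
      using edge_iff by blast
    thus ?thesis
    proof cases
      case 1
      have "P!i \<noteq> P!(length P - 1)" by (rule distinct_nth_neq[OF tpp_basic(1)]) (use 1 in auto)
      moreover have "P!Suc i \<noteq> P!0" by (rule distinct_nth_neq[OF tpp_basic(1)]) (use 1 in auto)
      moreover have "P!i \<in> set P" "P!Suc i \<in> set P" using 1 by auto
      ultimately show ?thesis using 1 tpp_basic(5,7) by auto
    next
      case 2
      have "Q!i \<noteq> Q!(length Q - 1)" by (rule distinct_nth_neq[OF tpp_basic(2)]) (use 2 in auto)
      moreover have "Q!Suc i \<noteq> Q!0" by (rule distinct_nth_neq[OF tpp_basic(2)]) (use 2 in auto)
      moreover have "Q!i \<in> set Q" "Q!Suc i \<in> set Q" using 2 by auto
      ultimately show ?thesis using 2 tpp_basic(6,8) by auto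
    qed
  qed
  thus "u \<in> set P \<union> set Q" "v \<in> set P \<union> set Q" "u \<noteq> d" "v \<noteq> s" by auto
qed

end

lemma interior_in:
  assumes G: "two_parallel_paths E s d P Q" and v: "v \<in> set P \<union> set Q - {s,d}"
  shows "\<exists>u. {z. (z,v) \<in> E} = {u}" "\<exists>w. {z. (v,z) \<in> E} = {w}"
proof -
  have "(\<exists>u. {z. (z,v) \<in> E} = {u}) \<and> (\<exists>w. {z. (v,z) \<in> E} = {w})"
  proof (cases "v \<in> set P")
    case True
    then obtain k where k: "k < length P" "v = P!k" by (auto simp: in_set_conv_nth)
    have vs: "v \<noteq> s" "v \<noteq> d" using v by auto
    have "k \<noteq> 0" using k vs tpp_basic(5)[OF G] by metis
    moreover have "k \<noteq> length P - 1" using k vs tpp_basic(7)[OF G] by metis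
    ultimately have "0 < k" "Suc k < length P" using k by auto
    thus ?thesis using in_interior[OF G] out_interior[OF G] k by blast
  next
    case False
    hence vQ: "v \<in> set Q" using v by auto
    note G' = tpp_sym[OF G]
    then obtain k where k: "k < length Q" "v = Q!k" using vQ by (auto simp: in_set_conv_nth)
    have vs: "v \<noteq> s" "v \<noteq> d" using v by auto
    have "k \<noteq> 0" using k vs tpp_basic(5)[OF G'] by metis
    moreover have "k \<noteq> length Q - 1" using k vs tpp_basic(7)[OF G'] by metis
    ultimately have "0 < k" "Suc k < length Q" using k by auto
    thus ?thesis using in_interior[OF G'] out_interior[OF G'] k by blast
  qed
  thus "\<exists>u. {z. (z,v) \<in> E} = {u}" "\<exists>w. {z. (v,z) \<in> E} = {w}" by auto
qed




lemma key_arith: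
  fixes a a' G c c' e e' H1 H2 \<rho> \<alpha> H :: real
  assumes pos: "a>0" "a'>0" "c>0" "c'>0" "e>0" "e'>0" "\<rho>>0" "\<alpha>>0" "G\<ge>0" "H2\<ge>0"
    and r: "a \<ge> \<rho>*a'" "c \<ge> \<rho>*c'" "e \<ge> \<rho>*e'"
    and H: "H1 \<ge> H2 + \<alpha>" "H1 \<le> H"
  shows "a + G*a/(a+a') + H1*c/(c+c') \<ge> \<rho>*(1 + \<alpha>/(a+a'+G+H)) * (a' + G*a'/(a+a') + H2*e'/(e+e'))"
proof -
  define g1 where "g1 = G*a/(a+a')"
  define g2 where "g2 = G*a'/(a+a')"
  define h1 where "h1 = H1*c/(c+c')"
  define h2 where "h2 = H2*e'/(e+e')"
  define D where "D = a' + g2 + h2"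
  define W where "W = a+a'+G+H"
  have g: "g1 \<ge> \<rho>*g2" unfolding g1_def g2_def using pos r
    by (simp add: divide_right_mono mult_left_mono mult.assoc mult.left_commute times_divide_eq_right)
  have cc: "c/(c+c') \<ge> \<rho>/(1+\<rho>)" using pos r by (simp add: field_simps)
  have ee: "e'/(e+e') \<le> 1/(1+\<rho>)" using pos r by (simp add: field_simps)
  have H1pos: "H1 \<ge> 0" using H pos by linarith
  have h1b: "h1 \<ge> H1*(\<rho>/(1+\<rho>))" unfolding h1_def using mult_left_mono[OF cc H1pos] by simp
  have h2b: "h2 \<le> H2*(1/(1+\<rho>))" unfolding h2_def using mult_left_mono[OF ee pos(10)] by simp
  have c1: "h1 - \<rho>*h2 \<ge> H1*(\<rho>/(1+\<rho>)) - \<rho>*(H2*(1/(1+\<rho>)))"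
    using h1b h2b pos by (smt (verit) mult_left_mono)
  have c2: "H1*(\<rho>/(1+\<rho>)) - \<rho>*(H2*(1/(1+\<rho>))) = \<rho>*(H1-H2)/(1+\<rho>)" using pos by (simp add: right_diff_distrib diff_divide_distrib)
  have c3: "\<rho>*(H1-H2)/(1+\<rho>) \<ge> \<rho>*\<alpha>/(1+\<rho>)" using pos H
    by (intro divide_right_mono mult_left_mono) auto
  have hh: "h1 - \<rho>*h2 \<ge> \<rho>*\<alpha>/(1+\<rho>)" using c1 c2 c3 by linarith
  have N: "a + g1 + h1 \<ge> \<rho>*D + \<rho>*\<alpha>/(1+\<rho>)" unfolding D_def using r(1) g hh
    by (simp add: algebra_simps)
  have a'b: "a' \<le> (a+a')/(1+\<rho>)" using pos r by (simp add: field_simps)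
  have g2b: "g2 \<le> G/(1+\<rho>)"
  proof -
    have "a'/(a+a') \<le> 1/(1+\<rho>)" using pos r by (simp add: field_simps)
    hence "G*(a'/(a+a')) \<le> G*(1/(1+\<rho>))" using pos by (intro mult_left_mono) auto
    thus ?thesis unfolding g2_def by simp
  qed
  have "H2/(1+\<rho>) \<le> H/(1+\<rho>)" using H pos by (intro divide_right_mono) auto
  hence h2b': "h2 \<le> H/(1+\<rho>)" using h2b by simp
  have Db: "D \<le> W/(1+\<rho>)" unfolding D_def W_def using a'b g2b h2b'
    by (simp add: add_divide_distrib)
  have Wpos: "W > 0" unfolding W_def using pos H H1pos by linarith
  have Dpos: "D \<ge> 0" unfolding D_def g2_def h2_def using pos by simp
  have "\<rho>*\<alpha>*D/W \<le> \<rho>*\<alpha>/(1+\<rho>)"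
  proof -
    have "D/W \<le> 1/(1+\<rho>)" using Db Wpos pos by (simp add: field_simps)
    hence "(\<rho>*\<alpha>)*(D/W) \<le> (\<rho>*\<alpha>)*(1/(1+\<rho>))" using pos by (intro mult_left_mono) auto
    thus ?thesis by simp
  qed
  hence "a + g1 + h1 \<ge> \<rho>*D + \<rho>*\<alpha>*D/W" using N by linarith
  also have "\<rho>*D + \<rho>*\<alpha>*D/W = \<rho>*(1 + \<alpha>/W)*D" using Wpos by (simp add: field_simps)
  finally show ?thesis unfolding g1_def h1_def D_def W_def g2_def h2_def by simp
qed

lemma geo_bound:
  fixes S W :: "nat \<Rightarrow> real" and \<delta> :: real
  assumes "0 < \<delta>" "\<delta> < 1" "\<And>t. S (Suc t) \<le> \<delta>*(S t + 2*W t)" "\<And>t. 0 \<le> W t" "\<And>t. W t \<le> W (Suc t)"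
  shows "S t \<le> \<delta>^t * S 0 + 2*W t/(1-\<delta>)"
proof (induction t)
  case 0 then show ?case using assms by simp
next
  case (Suc t)
  have "S (Suc t) \<le> \<delta>*(\<delta>^t * S 0 + 2*W t/(1-\<delta>) + 2*W t)"
    using assms(3)[of t] Suc assms(1) by (smt (verit) mult_left_mono)
  also have "\<dots> = \<delta>^Suc t * S 0 + 2*W t*(\<delta>/(1-\<delta>) + \<delta>)" by (simp add: algebra_simps)
  also have "\<delta>/(1-\<delta>) + \<delta> \<le> 1/(1-\<delta>)"
  proof -
    have sq: "0 \<le> (1-\<delta>)*(1-\<delta>)" by simp
    have "\<delta> + \<delta>*(1-\<delta>) \<le> 1" using sq by (simp add: algebra_simps)
    hence "(\<delta> + \<delta>*(1-\<delta>))/(1-\<delta>) \<le> 1/(1-\<delta>)" using assms(2) by (intro divide_right_mono) auto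
    moreover have "\<delta>/(1-\<delta>) + \<delta> = (\<delta> + \<delta>*(1-\<delta>))/(1-\<delta>)" using assms(2) by (simp add: add_divide_distrib)
    ultimately show ?thesis by simp
  qed
  hence "2*W t*(\<delta>/(1-\<delta>) + \<delta>) \<le> 2*W t*(1/(1-\<delta>))" using assms(4)[of t] by (intro mult_left_mono) auto
  also have "2*W t*(1/(1-\<delta>)) \<le> 2*W (Suc t)/(1-\<delta>)" using assms(2) assms(5)[of t] by (simp add: divide_right_mono)
  finally show ?case by simp
qed


lemma final_step:
  fixes a a' G c c' e e' H1 H2 \<rho> \<alpha> H \<delta> K X1 X1' :: real
  assumes pos: "a>0" "a'>0" "c>0" "c'>0" "e>0" "e'>0" "\<rho>>0" "\<alpha>>0" "G\<ge>0" "H2\<ge>0"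
    and r: "a \<ge> \<rho>*a'" "c \<ge> \<rho>*c'" "e \<ge> \<rho>*e'"
    and H: "H1 \<ge> H2 + \<alpha>" "H1 \<le> H"
    and dl: "0 < \<delta>" "\<delta> < 1" and K: "0 < K"
    and X1: "X1 = \<delta>*(a + G*a/(a+a') + H1*c/(c+c'))"
    and X1': "X1' = \<delta>*(a' + G*a'/(a'+a) + H2*e'/(e'+e))"
    and W: "a+a'+G+H \<le> 6*K/(1-\<delta>)"
  shows "(1 + \<alpha>*(1-\<delta>)/(6*K))*\<rho>*X1' \<le> X1"
proof -
  define W where "W = a+a'+G+H"
  define D where "D = a' + G*a'/(a+a') + H2*e'/(e+e')"
  have X1'': "X1' = \<delta>*D" unfolding D_def X1' by (simp add: add.commute)
  have ka: "a + G*a/(a+a') + H1*c/(c+c') \<ge> \<rho>*(1 + \<alpha>/W) * D"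
    unfolding W_def D_def by (rule key_arith[OF pos r H])
  have Wpos: "W > 0" unfolding W_def using pos H by linarith
  have Dpos: "D \<ge> 0" unfolding D_def using pos by simp
  have "\<alpha>/(6*K/(1-\<delta>)) \<le> \<alpha>/W"
    using W Wpos pos K dl by (intro divide_left_mono) (auto simp: W_def)
  moreover have "\<alpha>/(6*K/(1-\<delta>)) = \<alpha>*(1-\<delta>)/(6*K)" using dl K by (simp add: field_simps)
  ultimately have cW: "1 + \<alpha>*(1-\<delta>)/(6*K) \<le> 1 + \<alpha>/W" by simp
  have "(1 + \<alpha>*(1-\<delta>)/(6*K))*\<rho>*X1' = \<delta>*((1 + \<alpha>*(1-\<delta>)/(6*K))*(\<rho>*D))" using X1'' by simp
  also have "\<dots> \<le> \<delta>*((1 + \<alpha>/W)*(\<rho>*D))"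
    using cW pos Dpos dl by (intro mult_left_mono mult_right_mono) auto
  also have "\<dots> \<le> X1" unfolding X1 using ka dl by (intro mult_left_mono) (auto simp: algebra_simps)
  finally show ?thesis .
qed




locale ants =
  fixes E :: "('v \<times> 'v) set" and s d :: 'v and P Q :: "'v list" and \<delta> \<alpha> :: real
    and f b :: "nat \<Rightarrow> 'v \<Rightarrow> real" and p :: "nat \<Rightarrow> 'v \<Rightarrow> 'v \<Rightarrow> real"
  assumes G: "two_parallel_paths E s d P Q"
    and dyn: "ant_dynamics E s d (\<lambda>_. 0) \<delta> f b p"
    and delta: "0 < \<delta>" "\<delta> < 1"
    and alpha: "0 < \<alpha>"
    and p0: "\<forall>(u, v)\<in>E. 0 < p 0 u v"
    and fs0: "0 < f 0 s" and bd0: "0 < b 0 d"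
    and fs: "\<forall>t. f t s = f 0 s + \<alpha> * real t"
    and bd: "\<forall>t. b t d = b 0 d + \<alpha> * real t"
    and finit: "\<forall>v\<in>(set P \<union> set Q) - {s, d}. 0 \<le> f 0 v \<and> f 0 v \<le> f 0 s"
    and binit: "\<forall>v\<in>(set P \<union> set Q) - {s, d}. 0 \<le> b 0 v \<and> b 0 v \<le> b 0 d"
    and lenne: "length P \<noteq> length Q"
begin

lemma f_step: "v \<noteq> s \<Longrightarrow> f (Suc t) v = (\<Sum>z\<in>{z. (z, v) \<in> E}. fwd_edge E f p t z v)"
  using dyn unfolding ant_dynamics_def by simp
lemma b_step: "u \<noteq> d \<Longrightarrow> b (Suc t) u = (\<Sum>z\<in>{z. (u, z) \<in> E}. bwd_edge E b p t u z)"
  using dyn unfolding ant_dynamics_def by simp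
lemma p_step: "(u,v) \<in> E \<Longrightarrow>
   p (Suc t) u v = \<delta> * (p t u v + fwd_edge E f p t u v + bwd_edge E b p t u v)"
  using dyn unfolding ant_dynamics_def by simp

lemma fin_out: "finite {z. (u, z) \<in> E}"
proof -
  have "{z. (u, z) \<in> E} = E `` {u}" by auto
  thus ?thesis using finite_E[OF G] by (simp add: finite_Image)
qed
lemma fin_in: "finite {z. (z, v) \<in> E}"
proof -
  have "{z. (z, v) \<in> E} = (converse E) `` {v}" by auto
  thus ?thesis using finite_E[OF G] by (simp add: finite_Image)
qed

lemma Fval: "f t s = f 0 s + \<alpha> * real t" using fs by blast
lemma Bval: "b t d = b 0 d + \<alpha> * real t" using bd by blast
lemma Fmono: "f t s \<le> f (Suc t) s"
  using Fval[of t] Fval[of "Suc t"] alpha by simp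
lemma Bmono: "b t d \<le> b (Suc t) d"
  using Bval[of t] Bval[of "Suc t"] alpha by simp
lemma Fpos: "0 < f t s" using Fval[of t] fs0 alpha by (simp add: add_pos_nonneg)
lemma Bpos: "0 < b t d" using Bval[of t] bd0 alpha by (simp add: add_pos_nonneg)

lemma out_sum_pos:
  assumes "\<forall>u v. (u,v) \<in> E \<longrightarrow> 0 < q u v" "(u,v) \<in> E"
  shows "0 < out_sum E q u"
  unfolding out_sum_def using assms fin_out by (intro sum_pos) auto

lemma in_sum_pos:
  assumes "\<forall>u v. (u,v) \<in> E \<longrightarrow> 0 < q u v" "(u,v) \<in> E"
  shows "0 < in_sum E q v"
  unfolding in_sum_def using assms fin_in by (intro sum_pos) auto

lemma le_out_sum:
  assumes "\<forall>u v. (u,v) \<in> E \<longrightarrow> 0 < q u v" "(u,v) \<in> E"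
  shows "q u v \<le> out_sum E q u"
  unfolding out_sum_def using assms fin_out
  by (intro member_le_sum) (auto intro: less_imp_le)

lemma le_in_sum:
  assumes "\<forall>u v. (u,v) \<in> E \<longrightarrow> 0 < q u v" "(u,v) \<in> E"
  shows "q u v \<le> in_sum E q v"
  unfolding in_sum_def using assms fin_in
  by (intro member_le_sum) (auto intro: less_imp_le)

lemma fwd_bounds:
  assumes "\<forall>u v. (u,v) \<in> E \<longrightarrow> 0 < p t u v" "(u,v) \<in> E" "0 \<le> f t u"
  shows "0 \<le> fwd_edge E f p t u v" "fwd_edge E f p t u v \<le> f t u"
proof -
  have o: "0 < out_sum E (p t) u" by (rule out_sum_pos[OF assms(1,2)])
  have le: "p t u v \<le> out_sum E (p t) u" by (rule le_out_sum[OF assms(1,2)])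
  have pp: "0 < p t u v" using assms by auto
  show "0 \<le> fwd_edge E f p t u v" unfolding fwd_edge_def using o pp assms(3) by simp
  have "p t u v / out_sum E (p t) u \<le> 1" using o le by simp
  hence "f t u * (p t u v / out_sum E (p t) u) \<le> f t u * 1" using assms(3) by (intro mult_left_mono) auto
  thus "fwd_edge E f p t u v \<le> f t u" unfolding fwd_edge_def by simp
qed

lemma bwd_bounds:
  assumes "\<forall>u v. (u,v) \<in> E \<longrightarrow> 0 < p t u v" "(u,v) \<in> E" "0 \<le> b t v"
  shows "0 \<le> bwd_edge E b p t u v" "bwd_edge E b p t u v \<le> b t v"
proof -
  have o: "0 < in_sum E (p t) v" by (rule in_sum_pos[OF assms(1,2)])
  have le: "p t u v \<le> in_sum E (p t) v" by (rule le_in_sum[OF assms(1,2)])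
  have pp: "0 < p t u v" using assms by auto
  show "0 \<le> bwd_edge E b p t u v" unfolding bwd_edge_def using o pp assms(3) by simp
  have "p t u v / in_sum E (p t) v \<le> 1" using o le by simp
  hence "b t v * (p t u v / in_sum E (p t) v) \<le> b t v * 1" using assms(3) by (intro mult_left_mono) auto
  thus "bwd_edge E b p t u v \<le> b t v" unfolding bwd_edge_def by simp
qed

lemma inv: "(\<forall>u v. (u,v)\<in>E \<longrightarrow> 0 < p t u v) \<and> (\<forall>v\<in>(set P \<union> set Q)-{d}. 0 \<le> f t v)
   \<and> (\<forall>v\<in>(set P \<union> set Q)-{s}. 0 \<le> b t v)"
proof (induction t)
  case 0
  have "\<forall>u v. (u,v)\<in>E \<longrightarrow> 0 < p 0 u v" using p0 by auto
  moreover have "\<forall>v\<in>(set P \<union> set Q)-{d}. 0 \<le> f 0 v"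
  proof
    fix v assume "v \<in> (set P \<union> set Q)-{d}"
    thus "0 \<le> f 0 v" using finit fs0 by (cases "v = s") auto
  qed
  moreover have "\<forall>v\<in>(set P \<union> set Q)-{s}. 0 \<le> b 0 v"
  proof
    fix v assume "v \<in> (set P \<union> set Q)-{s}"
    thus "0 \<le> b 0 v" using binit bd0 by (cases "v = d") auto
  qed
  ultimately show ?case by blast
next
  case (Suc t)
  hence pp: "\<forall>u v. (u,v)\<in>E \<longrightarrow> 0 < p t u v" by blast
  have fe: "0 \<le> fwd_edge E f p t u v" if "(u,v) \<in> E" for u v
    using fwd_bounds(1)[OF pp that] Suc edge_ends[OF G that] by blast
  have be: "0 \<le> bwd_edge E b p t u v" if "(u,v) \<in> E" for u v
    using bwd_bounds(1)[OF pp that] Suc edge_ends[OF G that] by blast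
  have "\<forall>u v. (u,v)\<in>E \<longrightarrow> 0 < p (Suc t) u v"
  proof (intro allI impI)
    fix u v assume e: "(u,v) \<in> E"
    have "0 < p t u v + fwd_edge E f p t u v + bwd_edge E b p t u v"
      using pp e fe[OF e] be[OF e] by (smt (verit))
    thus "0 < p (Suc t) u v" using p_step[OF e] delta by simp
  qed
  moreover have "\<forall>v\<in>(set P \<union> set Q)-{d}. 0 \<le> f (Suc t) v"
  proof
    fix v assume "v \<in> (set P \<union> set Q)-{d}"
    show "0 \<le> f (Suc t) v"
    proof (cases "v = s")
      case True thus ?thesis using Fpos[of "Suc t"] by simp
    next
      case False
      have "0 \<le> (\<Sum>z\<in>{z. (z,v)\<in>E}. fwd_edge E f p t z v)" by (rule sum_nonneg) (simp add: fe)
      thus ?thesis using f_step[OF False] by simp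
    qed
  qed
  moreover have "\<forall>v\<in>(set P \<union> set Q)-{s}. 0 \<le> b (Suc t) v"
  proof
    fix v assume "v \<in> (set P \<union> set Q)-{s}"
    show "0 \<le> b (Suc t) v"
    proof (cases "v = d")
      case True thus ?thesis using Bpos[of "Suc t"] by simp
    next
      case False
      have "0 \<le> (\<Sum>z\<in>{z. (v,z)\<in>E}. bwd_edge E b p t v z)" by (rule sum_nonneg) (simp add: be)
      thus ?thesis using b_step[OF False] by simp
    qed
  qed
  ultimately show ?case by blast
qed

lemma ppos: "(u,v) \<in> E \<Longrightarrow> 0 < p t u v" using inv by blast
lemma ppos': "\<forall>u v. (u,v)\<in>E \<longrightarrow> 0 < p t u v" using inv by blast
lemma fnn: "v \<in> set P \<union> set Q \<Longrightarrow> v \<noteq> d \<Longrightarrow> 0 \<le> f t v" using inv by blast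
lemma bnn: "v \<in> set P \<union> set Q \<Longrightarrow> v \<noteq> s \<Longrightarrow> 0 \<le> b t v" using inv by blast

lemma bounds: "(\<forall>v\<in>(set P \<union> set Q)-{s,d}. f t v \<le> f t s) \<and> (\<forall>v\<in>(set P \<union> set Q)-{s,d}. b t v \<le> b t d)"
proof (induction t)
  case 0 thus ?case using finit binit by blast
next
  case (Suc t)
  have A: "\<forall>v\<in>(set P \<union> set Q)-{s,d}. f (Suc t) v \<le> f (Suc t) s"
  proof
    fix v assume v: "v \<in> (set P \<union> set Q)-{s,d}"
    obtain u where u: "{z. (z,v) \<in> E} = {u}" using interior_in(1)[OF G v] by blast
    have e: "(u,v) \<in> E" using u by blast
    have "f (Suc t) v = fwd_edge E f p t u v" using f_step[of v t] v u by simp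
    also have "\<dots> \<le> f t u" using fwd_bounds(2)[OF ppos' e] fnn edge_ends[OF G e] by blast
    also have "\<dots> \<le> f t s" using Suc edge_ends[OF G e] by (cases "u = s") auto
    also have "\<dots> \<le> f (Suc t) s" by (rule Fmono)
    finally show "f (Suc t) v \<le> f (Suc t) s" .
  qed
  have B: "\<forall>v\<in>(set P \<union> set Q)-{s,d}. b (Suc t) v \<le> b (Suc t) d"
  proof
    fix v assume v: "v \<in> (set P \<union> set Q)-{s,d}"
    obtain w where w: "{z. (v,z) \<in> E} = {w}" using interior_in(2)[OF G v] by blast
    have e: "(v,w) \<in> E" using w by blast
    have "b (Suc t) v = bwd_edge E b p t v w" using b_step[of v t] v w by simp
    also have "\<dots> \<le> b t w" using bwd_bounds(2)[OF ppos' e] bnn edge_ends[OF G e] by blast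
    also have "\<dots> \<le> b t d" using Suc edge_ends[OF G e] by (cases "w = d") auto
    also have "\<dots> \<le> b (Suc t) d" by (rule Bmono)
    finally show "b (Suc t) v \<le> b (Suc t) d" .
  qed
  show ?case using A B by blast
qed

lemma fle: "v \<in> set P \<union> set Q \<Longrightarrow> v \<noteq> d \<Longrightarrow> f t v \<le> f t s"
  using bounds by (cases "v = s") auto
lemma ble: "v \<in> set P \<union> set Q \<Longrightarrow> v \<noteq> s \<Longrightarrow> b t v \<le> b t d"
  using bounds by (cases "v = d") auto


lemma single_out:
  assumes "{z. (u,z) \<in> E} = {w}"
  shows "fwd_edge E f p t u w = f t u"
proof -
  have e: "(u,w) \<in> E" using assms by blast
  have "out_sum E (p t) u = p t u w" unfolding out_sum_def using assms by simp
  thus ?thesis unfolding fwd_edge_def using ppos[OF e, of t] by simp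
qed

lemma single_in:
  assumes "{z. (z,v) \<in> E} = {u}"
  shows "bwd_edge E b p t u v = b t v"
proof -
  have e: "(u,v) \<in> E" using assms by blast
  have "in_sum E (p t) v = p t u v" unfolding in_sum_def using assms by simp
  thus ?thesis unfolding bwd_edge_def using ppos[OF e, of t] by simp
qed

lemmas TB = tpp_basic[OF G]

lemma fwd_trace:
  assumes "1 \<le> k" "k < length P - 1"
  shows "f (\<tau> + k) (P!k) = fwd_edge E f p \<tau> s (P!1)"
  using assms
proof (induction k rule: nat_induct_at_least)
  case base
  have "P!1 \<noteq> P!0" by (rule distinct_nth_neq[OF TB(1)]) (use TB(3) in auto)
  hence ne: "P!1 \<noteq> s" using TB(5) by simp
  have "{z. (z, P!1) \<in> E} = {P!0}" using in_interior[OF G, of 1] base by simp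
  hence "{z. (z, P!1) \<in> E} = {s}" using TB(5) by simp
  thus ?case using f_step[OF ne, of \<tau>] by simp
next
  case (Suc k)
  have "P!Suc k \<noteq> P!0" by (rule distinct_nth_neq[OF TB(1)]) (use Suc in auto)
  hence ne: "P!Suc k \<noteq> s" using TB(5) by simp
  have "{z. (z, P!Suc k) \<in> E} = {P!k}" using in_interior[OF G, of "Suc k"] Suc by simp
  hence "f (\<tau> + Suc k) (P!Suc k) = fwd_edge E f p (\<tau>+k) (P!k) (P!Suc k)"
    using f_step[OF ne, of "\<tau>+k"] by simp
  also have "\<dots> = f (\<tau>+k) (P!k)" using single_out out_interior[OF G, of k] Suc by simp
  also have "\<dots> = fwd_edge E f p \<tau> s (P!1)" using Suc by simp
  finally show ?case .
qed

lemma fwd_last: "fwd_edge E f p (\<tau> + (length P - 2)) (P!(length P - 2)) d = fwd_edge E f p \<tau> s (P!1)"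
proof (cases "length P = 2")
  case True
  thus ?thesis using TB(5,7) by (simp add: numeral_2_eq_2)
next
  case False
  hence k: "1 \<le> length P - 2" "length P - 2 < length P - 1" "0 < length P - 2" "Suc (length P - 2) < length P"
    using TB(3) by auto
  have "Suc (length P - 2) = length P - 1" using False TB(3) by simp
  hence "{z. (P!(length P - 2), z) \<in> E} = {d}" using out_interior[OF G, of "length P - 2"] k TB(7) by simp
  hence "fwd_edge E f p (\<tau> + (length P - 2)) (P!(length P - 2)) d = f (\<tau> + (length P - 2)) (P!(length P - 2))"
    by (rule single_out)
  also have "\<dots> = fwd_edge E f p \<tau> s (P!1)" by (rule fwd_trace[OF k(1,2)])
  finally show ?thesis .
qed

lemma bwd_trace:
  assumes "1 \<le> j" "j < length P - 1"
  shows "b (\<tau> + j) (P!(length P - 1 - j)) = bwd_edge E b p \<tau> (P!(length P - 2)) d"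
  using assms
proof (induction j rule: nat_induct_at_least)
  case base
  have i: "0 < length P - 2" "Suc (length P - 2) < length P" "length P - 2 < length P - 1"
    using base TB(3) by auto
  have ne: "P!(length P - 2) \<noteq> d"
    using distinct_nth_neq[OF TB(1), of "length P - 2" "length P - 1"] TB(7) i by auto
  have "Suc (length P - 2) = length P - 1" using base by simp
  hence "{z. (P!(length P - 2), z) \<in> E} = {d}" using out_interior[OF G, of "length P - 2"] i TB(7) by simp
  moreover have "length P - 1 - 1 = length P - 2" by simp
  ultimately show ?case using b_step[OF ne, of \<tau>] by simp
next
  case (Suc j)
  define i where "i = length P - 1 - Suc j"
  have i: "0 < i" "Suc i < length P" "Suc i = length P - 1 - j" "0 < Suc i" "Suc (Suc i) < length P"
    using Suc unfolding i_def by auto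
  have ne: "P!i \<noteq> d"
    using distinct_nth_neq[OF TB(1), of i "length P - 1"] TB(7) i by auto
  have "{z. (P!i, z) \<in> E} = {P!Suc i}" using out_interior[OF G, of i] i by simp
  hence "b (\<tau> + Suc j) (P!i) = bwd_edge E b p (\<tau>+j) (P!i) (P!Suc i)"
    using b_step[OF ne, of "\<tau>+j"] by simp
  also have "\<dots> = b (\<tau>+j) (P!Suc i)"
  proof -
    have "{z. (z, P!Suc i) \<in> E} = {P!i}" using in_interior[OF G, of "Suc i"] i(4,5) by simp
    thus ?thesis by (rule single_in)
  qed
  also have "\<dots> = bwd_edge E b p \<tau> (P!(length P - 2)) d" using Suc i(3) by simp
  finally show ?case unfolding i_def .
qed

lemma bwd_first: "bwd_edge E b p (\<tau> + (length P - 2)) s (P!1) = bwd_edge E b p \<tau> (P!(length P - 2)) d"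
proof (cases "length P = 2")
  case True
  thus ?thesis using TB(5,7) by (simp add: numeral_2_eq_2)
next
  case False
  hence k: "1 \<le> length P - 2" "length P - 2 < length P - 1" "Suc 1 < length P"
    using TB(3) by auto
  have "{z. (z, P!1) \<in> E} = {s}" using in_interior[OF G, of 1] k TB(5) by simp
  hence "bwd_edge E b p (\<tau> + (length P - 2)) s (P!1) = b (\<tau> + (length P - 2)) (P!1)"
    by (rule single_in)
  also have "\<dots> = bwd_edge E b p \<tau> (P!(length P - 2)) d"
    using bwd_trace[OF k(1,2), of \<tau>] False TB(3) by (simp add: Suc_diff_Suc numeral_2_eq_2)
  finally show ?thesis .
qed

lemma out_s_sum: "out_sum E (p t) s = p t s (P!1) + p t s (Q!1)"
  unfolding out_sum_def using out_s[OF G] firsts_ne[OF G lenne] by simp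

lemma in_d_sum: "in_sum E (p t) d = p t (P!(length P - 2)) d + p t (Q!(length Q - 2)) d"
  unfolding in_sum_def using in_d[OF G] lasts_ne[OF G lenne] by simp

lemma eP1: "(s, P!1) \<in> E" using out_s[OF G] by blast
lemma eQ1: "(s, Q!1) \<in> E" using out_s[OF G] by blast
lemma ePd: "(P!(length P - 2), d) \<in> E" using in_d[OF G] by blast
lemma eQd: "(Q!(length Q - 2), d) \<in> E" using in_d[OF G] by blast

lemma xstep:
  assumes "length P - 2 \<le> \<tau>"
  shows "p (Suc \<tau>) s (P!1) = \<delta> * (p \<tau> s (P!1) + f \<tau> s * p \<tau> s (P!1) / (p \<tau> s (P!1) + p \<tau> s (Q!1))
      + b (\<tau> - (length P - 2)) d * p (\<tau> - (length P - 2)) (P!(length P - 2)) d /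
        (p (\<tau> - (length P - 2)) (P!(length P - 2)) d + p (\<tau> - (length P - 2)) (Q!(length Q - 2)) d))"
proof -
  have t: "\<tau> = (\<tau> - (length P - 2)) + (length P - 2)" using assms by simp
  have "bwd_edge E b p \<tau> s (P!1) = bwd_edge E b p (\<tau> - (length P - 2)) (P!(length P - 2)) d"
    using bwd_first[of "\<tau> - (length P - 2)"] t by simp
  thus ?thesis using p_step[OF eP1, of \<tau>] unfolding fwd_edge_def
    by (simp add: out_s_sum bwd_edge_def in_d_sum)
qed

lemma ystep:
  assumes "length P - 2 \<le> \<tau>"
  shows "p (Suc \<tau>) (P!(length P - 2)) d = \<delta> * (p \<tau> (P!(length P - 2)) d
      + b \<tau> d * p \<tau> (P!(length P - 2)) d / (p \<tau> (P!(length P - 2)) d + p \<tau> (Q!(length Q - 2)) d)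
      + f (\<tau> - (length P - 2)) s * p (\<tau> - (length P - 2)) s (P!1) /
        (p (\<tau> - (length P - 2)) s (P!1) + p (\<tau> - (length P - 2)) s (Q!1)))"
proof -
  have t: "\<tau> = (\<tau> - (length P - 2)) + (length P - 2)" using assms by simp
  have "fwd_edge E f p \<tau> (P!(length P - 2)) d = fwd_edge E f p (\<tau> - (length P - 2)) s (P!1)"
    using fwd_last[of "\<tau> - (length P - 2)"] t by simp
  thus ?thesis using p_step[OF ePd, of \<tau>] unfolding bwd_edge_def
    by (simp add: in_d_sum fwd_edge_def out_s_sum add_ac)
qed


lemma Sx_step: "p (Suc t) s (P!1) + p (Suc t) s (Q!1) \<le> \<delta> * (p t s (P!1) + p t s (Q!1) + 2*(f t s + b t d))"
proof -
  have x: "0 < p t s (P!1)" "0 < p t s (Q!1)" using ppos eP1 eQ1 by auto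
  have fsum: "fwd_edge E f p t s (P!1) + fwd_edge E f p t s (Q!1) = f t s"
    unfolding fwd_edge_def out_s_sum using x by (simp add: add_divide_distrib[symmetric] ring_distribs[symmetric])
  have v1: "P!1 \<in> set P \<union> set Q" "P!1 \<noteq> s" using edge_ends[OF G eP1] by auto
  have v2: "Q!1 \<in> set P \<union> set Q" "Q!1 \<noteq> s" using edge_ends[OF G eQ1] by auto
  have b1: "bwd_edge E b p t s (P!1) \<le> b t d"
    using bwd_bounds(2)[OF ppos'[of t] eP1 bnn[OF v1, of t]] ble[OF v1, of t] by linarith
  have b2: "bwd_edge E b p t s (Q!1) \<le> b t d"
    using bwd_bounds(2)[OF ppos'[of t] eQ1 bnn[OF v2, of t]] ble[OF v2, of t] by linarith
  have "p (Suc t) s (P!1) + p (Suc t) s (Q!1) = \<delta> * (p t s (P!1) + p t s (Q!1)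
     + (fwd_edge E f p t s (P!1) + fwd_edge E f p t s (Q!1)) + bwd_edge E b p t s (P!1) + bwd_edge E b p t s (Q!1))"
    using p_step[OF eP1, of t] p_step[OF eQ1, of t] by (simp add: algebra_simps)
  also have "\<dots> \<le> \<delta> * (p t s (P!1) + p t s (Q!1) + 2*(f t s + b t d))"
    using fsum b1 b2 delta Fpos[of t] by (intro mult_left_mono) auto
  finally show ?thesis .
qed

lemma Sy_step: "p (Suc t) (P!(length P - 2)) d + p (Suc t) (Q!(length Q - 2)) d
   \<le> \<delta> * (p t (P!(length P - 2)) d + p t (Q!(length Q - 2)) d + 2*(f t s + b t d))"
proof -
  have y: "0 < p t (P!(length P - 2)) d" "0 < p t (Q!(length Q - 2)) d" using ppos ePd eQd by auto
  have bsum: "bwd_edge E b p t (P!(length P - 2)) d + bwd_edge E b p t (Q!(length Q - 2)) d = b t d"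
    unfolding bwd_edge_def in_d_sum using y by (simp add: add_divide_distrib[symmetric] ring_distribs[symmetric])
  have v1: "P!(length P - 2) \<in> set P \<union> set Q" "P!(length P - 2) \<noteq> d" using edge_ends[OF G ePd] by auto
  have v2: "Q!(length Q - 2) \<in> set P \<union> set Q" "Q!(length Q - 2) \<noteq> d" using edge_ends[OF G eQd] by auto
  have f1: "fwd_edge E f p t (P!(length P - 2)) d \<le> f t s"
    using fwd_bounds(2)[OF ppos'[of t] ePd fnn[OF v1, of t]] fle[OF v1, of t] by linarith
  have f2: "fwd_edge E f p t (Q!(length Q - 2)) d \<le> f t s"
    using fwd_bounds(2)[OF ppos'[of t] eQd fnn[OF v2, of t]] fle[OF v2, of t] by linarith
  have "p (Suc t) (P!(length P - 2)) d + p (Suc t) (Q!(length Q - 2)) d = \<delta> * (p t (P!(length P - 2)) d + p t (Q!(length Q - 2)) d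
     + (bwd_edge E b p t (P!(length P - 2)) d + bwd_edge E b p t (Q!(length Q - 2)) d)
     + fwd_edge E f p t (P!(length P - 2)) d + fwd_edge E f p t (Q!(length Q - 2)) d)"
    using p_step[OF ePd, of t] p_step[OF eQd, of t] by (simp add: algebra_simps)
  also have "\<dots> \<le> \<delta> * (p t (P!(length P - 2)) d + p t (Q!(length Q - 2)) d + 2*(f t s + b t d))"
    using bsum f1 f2 delta Bpos[of t] by (intro mult_left_mono) auto
  finally show ?thesis .
qed

lemma W_props: "0 \<le> f t s + b t d" "f t s + b t d \<le> f (Suc t) s + b (Suc t) d"
  using Fpos[of t] Bpos[of t] Fmono[of t] Bmono[of t] by auto

lemma Sx_bound: "p t s (P!1) + p t s (Q!1) \<le> \<delta>^t * (p 0 s (P!1) + p 0 s (Q!1)) + 2*(f t s + b t d)/(1-\<delta>)"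
  using geo_bound[of \<delta> "\<lambda>t. p t s (P!1) + p t s (Q!1)" "\<lambda>t. f t s + b t d", OF delta Sx_step W_props] .

lemma Sy_bound: "p t (P!(length P - 2)) d + p t (Q!(length Q - 2)) d \<le>
   \<delta>^t * (p 0 (P!(length P - 2)) d + p 0 (Q!(length Q - 2)) d) + 2*(f t s + b t d)/(1-\<delta>)"
  using geo_bound[of \<delta> "\<lambda>t. p t (P!(length P - 2)) d + p t (Q!(length Q - 2)) d" "\<lambda>t. f t s + b t d", OF delta Sy_step W_props] .

lemma init_small:
  assumes "real t \<ge> Max ((\<lambda>(u, v). ln (p 0 u v / (f 0 s + b 0 d)) / ln (1 / \<delta>)) ` E)"
    and e: "(u,v) \<in> E"
  shows "\<delta>^t * p 0 u v \<le> f 0 s + b 0 d"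
proof -
  have fin: "finite E" by (rule finite_E[OF G])
  have "ln (p 0 u v / (f 0 s + b 0 d)) / ln (1 / \<delta>) \<le> Max ((\<lambda>(u, v). ln (p 0 u v / (f 0 s + b 0 d)) / ln (1 / \<delta>)) ` E)"
    using e fin by (intro Max_ge) (auto intro!: image_eqI[of _ _ "(u,v)"])
  hence le: "ln (p 0 u v / (f 0 s + b 0 d)) / ln (1 / \<delta>) \<le> real t" using assms(1) by linarith
  have lpos: "0 < ln (1/\<delta>)" using delta by simp
  have c: "0 < f 0 s + b 0 d" using fs0 bd0 by simp
  have pp: "0 < p 0 u v" using ppos[OF e] .
  have "ln (p 0 u v / (f 0 s + b 0 d)) \<le> real t * ln (1/\<delta>)" using le lpos by (simp add: divide_le_eq)
  also have "\<dots> = ln ((1/\<delta>)^t)" using delta by (simp add: ln_realpow)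
  finally have "p 0 u v / (f 0 s + b 0 d) \<le> (1/\<delta>)^t" using pp c delta by (subst (asm) ln_le_cancel_iff) auto
  hence "p 0 u v \<le> (f 0 s + b 0 d) / \<delta>^t" using c by (simp add: divide_le_eq power_one_over field_simps)
  thus ?thesis using delta by (simp add: field_simps)
qed

end



theorem mainTheorem15:
  fixes E :: "('v \<times> 'v) set" and s d :: 'v and P1 P2 :: "'v list"
    and l :: "'v \<Rightarrow> real" and \<delta> \<alpha> :: real
    and f b :: "nat \<Rightarrow> 'v \<Rightarrow> real" and p :: "nat \<Rightarrow> 'v \<Rightarrow> 'v \<Rightarrow> real"
    and t :: nat
  assumes G: "two_parallel_paths E s d P1 P2"
    and dyn: "ant_dynamics E s d l \<delta> f b p"
    and delta: "0 < \<delta>" "\<delta> < 1"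
    and leak: "\<forall>v. l v = 0"
    and mn: "plen P1 < plen P2"
    and p0: "\<forall>(u, v)\<in>E. 0 < p 0 u v"
    and alpha: "0 < \<alpha>"
    and fs0: "0 < f 0 s" and bd0: "0 < b 0 d"
    and fs: "\<forall>t. f t s = f 0 s + \<alpha> * real t"
    and bd: "\<forall>t. b t d = b 0 d + \<alpha> * real t"
    and finit: "\<forall>v\<in>(set P1 \<union> set P2) - {s, d}. 0 \<le> f 0 v \<and> f 0 v \<le> f 0 s"
    and binit: "\<forall>v\<in>(set P1 \<union> set P2) - {s, d}. 0 \<le> b 0 v \<and> b 0 v \<le> b 0 d"
    and tL: "real t \<ge> real (max (plen P1) (plen P2)) +
               max 0 (Max ((\<lambda>(u, v). ln (p 0 u v / (f 0 s + b 0 d)) / ln (1 / \<delta>)) ` E))"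
  shows "r_min p s d P1 P2 (t + max (plen P1) (plen P2)) \<ge>
           (1 + \<alpha> * (1 - \<delta>) / (6 * (f 0 s + b 0 d + 2 * \<alpha> * real (max (plen P1) (plen P2))
                                     + 2 * \<alpha> * real t))) * r_min p s d P1 P2 t"
proof -
  have l0: "l = (\<lambda>_. 0)" using leak by auto
  have dyn0: "ant_dynamics E s d (\<lambda>_. 0) \<delta> f b p" using dyn l0 by simp
  have lenne: "length P1 \<noteq> length P2" using mn by (auto simp: plen_def)
  have finit': "\<forall>v\<in>(set P2 \<union> set P1) - {s, d}. 0 \<le> f 0 v \<and> f 0 v \<le> f 0 s"
    using finit by (metis Un_commute)
  have binit': "\<forall>v\<in>(set P2 \<union> set P1) - {s, d}. 0 \<le> b 0 v \<and> b 0 v \<le> b 0 d"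
    using binit by (metis Un_commute)
  interpret A: ants E s d P1 P2 \<delta> \<alpha> f b p
    by (rule ants.intro[OF G dyn0 delta alpha p0 fs0 bd0 fs bd finit binit lenne])
  interpret B: ants E s d P2 P1 \<delta> \<alpha> f b p
    by (rule ants.intro[OF tpp_sym[OF G] dyn0 delta alpha p0 fs0 bd0 fs bd finit' binit' lenne[symmetric]])
  define m where "m = length P1 - 1"
  define n where "n = length P2 - 1"
  have mn': "m < n" "plen P1 = m" "plen P2 = n" "max (plen P1) (plen P2) = n"
    using mn unfolding m_def n_def plen_def by auto
  have len: "length P1 - 2 = m - 1" "length P2 - 2 = n - 1" "1 \<le> m"
    unfolding m_def n_def using A.TB(3) by auto
  define x where "x \<tau> = p \<tau> s (P1!1)" for \<tau>
  define x' where "x' \<tau> = p \<tau> s (P2!1)" for \<tau>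
  define y where "y \<tau> = p \<tau> (P1!(length P1 - 2)) d" for \<tau>
  define y' where "y' \<tau> = p \<tau> (P2!(length P2 - 2)) d" for \<tau>
  have pos: "0 < x \<tau>" "0 < x' \<tau>" "0 < y \<tau>" "0 < y' \<tau>" for \<tau>
    unfolding x_def x'_def y_def y'_def using A.ppos[OF A.eP1] A.ppos[OF B.eP1]
      A.ppos[OF A.ePd] A.ppos[OF B.ePd] by auto
  have rmin_eq: "r_min p s d P1 P2 \<tau> = Min ((\<lambda>i. x (\<tau> - i) / x' (\<tau> - i)) ` {..<n} \<union> (\<lambda>i. y (\<tau> - i) / y' (\<tau> - i)) ` {..<n})" for \<tau>
    unfolding r_min_def Let_def mn'(4) succ_s_def pred_d_def x_def x'_def y_def y'_def ..
  have npos: "0 < n" using mn' by simp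
  define M where "M = Max ((\<lambda>(u, v). ln (p 0 u v / (f 0 s + b 0 d)) / ln (1 / \<delta>)) ` E)"
  have tn: "n \<le> t" using tL mn'(4) by (simp add: M_def)
  have tM: "M \<le> real t - real n" using tL mn'(4) unfolding M_def by simp
  define K where "K = f 0 s + b 0 d + 2 * \<alpha> * real n + 2 * \<alpha> * real t"
  have Kpos: "0 < K" unfolding K_def using fs0 bd0 alpha by (intro add_pos_nonneg) auto
  define c where "c = \<alpha> * (1 - \<delta>) / (6 * K)"
  have cpos: "0 \<le> c" unfolding c_def using alpha delta Kpos by simp
  define \<rho> where "\<rho> = r_min p s d P1 P2 t"
  define Sset where "Sset \<tau> = (\<lambda>i. x (\<tau> - i) / x' (\<tau> - i)) ` {..<n} \<union> (\<lambda>i. y (\<tau> - i) / y' (\<tau> - i)) ` {..<n}" for \<tau>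
  have Sfin: "finite (Sset \<tau>)" "Sset \<tau> \<noteq> {}" for \<tau> unfolding Sset_def using npos by auto
  have rho_eq: "\<rho> = Min (Sset t)" unfolding \<rho>_def rmin_eq Sset_def ..
  have rpos: "0 < \<rho>" unfolding rho_eq using Sfin pos
    by (subst Min_gr_iff) (auto simp: Sset_def)
  have window: "\<rho> * x' j \<le> x j \<and> \<rho> * y' j \<le> y j" if "t - n < j" "j \<le> t" for j
  proof -
    have i: "t - j < n" "j = t - (t - j)" using that tn by auto
    have "\<rho> \<le> x j / x' j" unfolding rho_eq using Sfin i by (intro Min_le) (auto simp: Sset_def intro!: image_eqI[of _ _ "t - j"])
    moreover have "\<rho> \<le> y j / y' j" unfolding rho_eq using Sfin i by (intro Min_le) (auto simp: Sset_def intro!: image_eqI[of _ _ "t - j"])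
    ultimately show ?thesis using pos[of j] by (simp add: pos_le_divide_eq)
  qed

  have Kge: "f \<tau> s + b \<tau> d \<le> K" if "\<tau> \<le> t + n" for \<tau>
  proof -
    have "real \<tau> \<le> real t + real n" using that by simp
    hence "2*\<alpha>*real \<tau> \<le> 2*\<alpha>*(real t + real n)" using alpha by (intro mult_left_mono) auto
    hence "2*\<alpha>*real \<tau> \<le> 2*\<alpha>*real n + 2*\<alpha>*real t" by (simp add: algebra_simps)
    thus ?thesis unfolding K_def using A.Fval[of \<tau>] A.Bval[of \<tau>] by linarith
  qed
  have F0K: "f 0 s + b 0 d \<le> K" using Kge[of 0] A.Fval[of 0] by simp
  have sm: "\<delta>^\<tau> * p 0 u v \<le> f 0 s + b 0 d" if "t \<le> \<tau>" "(u,v) \<in> E" for \<tau> u v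
  proof (rule A.init_small[OF _ that(2)])
    have "real t \<le> real \<tau>" using that by simp
    thus "Max ((\<lambda>(u, v). ln (p 0 u v / (f 0 s + b 0 d)) / ln (1 / \<delta>)) ` E) \<le> real \<tau>"
      using tM unfolding M_def by linarith
  qed
  have dK: "3*K + 2*K/(1-\<delta>) \<le> 6*K/(1-\<delta>)"
  proof -
    have "3*K \<le> 3*K/(1-\<delta>)" using Kpos delta by (simp add: le_divide_eq)
    moreover have "3*K/(1-\<delta>) + 2*K/(1-\<delta>) \<le> 6*K/(1-\<delta>)" using Kpos delta
      by (simp add: add_divide_distrib[symmetric] divide_right_mono)
    ultimately show ?thesis by linarith
  qed
  have twoK: "2*(f \<tau> s + b \<tau> d)/(1-\<delta>) \<le> 2*K/(1-\<delta>)" if "\<tau> \<le> t + n" for \<tau>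
    using Kge[OF that] delta by (intro divide_right_mono) auto
  have step: "(1+c)*\<rho>*x' (Suc \<tau>) \<le> x (Suc \<tau>) \<and> (1+c)*\<rho>*y' (Suc \<tau>) \<le> y (Suc \<tau>)"
    if \<tau>1: "t \<le> \<tau>" "\<tau> < t + n" and hyp: "\<And>j. t - n < j \<Longrightarrow> j \<le> \<tau> \<Longrightarrow> \<rho>*x' j \<le> x j \<and> \<rho>*y' j \<le> y j" for \<tau>
  proof -
    define \<sigma>1 where "\<sigma>1 = \<tau> - (m-1)"
    define \<sigma>2 where "\<sigma>2 = \<tau> - (n-1)"
    have sig: "t - n < \<sigma>2" "\<sigma>2 \<le> \<tau>" "t - n < \<sigma>1" "\<sigma>1 \<le> \<tau>" "\<sigma>2 + 1 \<le> \<sigma>1"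
      using \<tau>1 tn mn' len unfolding \<sigma>1_def \<sigma>2_def by auto
    have sig': "real \<sigma>2 + 1 \<le> real \<sigma>1" using sig(5) by linarith
    have h1: "\<rho>*x' \<sigma>1 \<le> x \<sigma>1 \<and> \<rho>*y' \<sigma>1 \<le> y \<sigma>1" using hyp sig by blast
    have h2: "\<rho>*x' \<sigma>2 \<le> x \<sigma>2 \<and> \<rho>*y' \<sigma>2 \<le> y \<sigma>2" using hyp sig by blast
    have h0: "\<rho>*x' \<tau> \<le> x \<tau> \<and> \<rho>*y' \<tau> \<le> y \<tau>" using hyp \<tau>1 tn by auto
    have "\<alpha>*(real \<sigma>2 + 1) \<le> \<alpha>*real \<sigma>1" using sig' alpha by (intro mult_left_mono) auto
    hence am: "\<alpha>*real \<sigma>2 + \<alpha> \<le> \<alpha>*real \<sigma>1" by (simp add: algebra_simps)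
    have am2: "\<alpha>*real \<sigma>1 \<le> \<alpha>*real \<tau>" using sig(4) alpha by (intro mult_left_mono) auto
    have Bs: "b \<sigma>2 d + \<alpha> \<le> b \<sigma>1 d" "b \<sigma>1 d \<le> b \<tau> d"
      using A.Bval[of \<sigma>1] A.Bval[of \<sigma>2] A.Bval[of \<tau>] am am2 by linarith+
    have Fs: "f \<sigma>2 s + \<alpha> \<le> f \<sigma>1 s" "f \<sigma>1 s \<le> f \<tau> s"
      using A.Fval[of \<sigma>1] A.Fval[of \<sigma>2] A.Fval[of \<tau>] am am2 by linarith+
    have tle: "\<tau> \<le> t + n" using \<tau>1 by simp
    have Wx: "x \<tau> + x' \<tau> + f \<tau> s + b \<tau> d \<le> 6*K/(1-\<delta>)"
    proof -
      have "x \<tau> + x' \<tau> \<le> \<delta>^\<tau> * (x 0 + x' 0) + 2*(f \<tau> s + b \<tau> d)/(1-\<delta>)"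
        using A.Sx_bound[of \<tau>] unfolding x_def x'_def .
      moreover have "\<delta>^\<tau> * (x 0 + x' 0) \<le> 2*K"
        using sm[OF \<tau>1(1) A.eP1] sm[OF \<tau>1(1) B.eP1] F0K unfolding x_def x'_def
        by (simp add: distrib_left)
      ultimately show ?thesis using twoK[OF tle] Kge[OF tle] dK by linarith
    qed
    have Wy: "y \<tau> + y' \<tau> + b \<tau> d + f \<tau> s \<le> 6*K/(1-\<delta>)"
    proof -
      have "y \<tau> + y' \<tau> \<le> \<delta>^\<tau> * (y 0 + y' 0) + 2*(f \<tau> s + b \<tau> d)/(1-\<delta>)"
        using A.Sy_bound[of \<tau>] unfolding y_def y'_def .
      moreover have "\<delta>^\<tau> * (y 0 + y' 0) \<le> 2*K"
        using sm[OF \<tau>1(1) A.ePd] sm[OF \<tau>1(1) B.ePd] F0K unfolding y_def y'_def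
        by (simp add: distrib_left)
      ultimately show ?thesis using twoK[OF tle] Kge[OF tle] dK by linarith
    qed
    have mt: "length P1 - 2 \<le> \<tau>" "length P2 - 2 \<le> \<tau>" using len \<tau>1 tn mn' by auto
    have X1: "x (Suc \<tau>) = \<delta>*(x \<tau> + f \<tau> s * x \<tau>/(x \<tau> + x' \<tau>) + b \<sigma>1 d * y \<sigma>1/(y \<sigma>1 + y' \<sigma>1))"
      using A.xstep[OF mt(1)] unfolding x_def x'_def y_def y'_def \<sigma>1_def len .
    have X1': "x' (Suc \<tau>) = \<delta>*(x' \<tau> + f \<tau> s * x' \<tau>/(x' \<tau> + x \<tau>) + b \<sigma>2 d * y' \<sigma>2/(y' \<sigma>2 + y \<sigma>2))"
      using B.xstep[OF mt(2)] unfolding x_def x'_def y_def y'_def \<sigma>2_def len .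
    have Y1: "y (Suc \<tau>) = \<delta>*(y \<tau> + b \<tau> d * y \<tau>/(y \<tau> + y' \<tau>) + f \<sigma>1 s * x \<sigma>1/(x \<sigma>1 + x' \<sigma>1))"
      using A.ystep[OF mt(1)] unfolding x_def x'_def y_def y'_def \<sigma>1_def len .
    have Y1': "y' (Suc \<tau>) = \<delta>*(y' \<tau> + b \<tau> d * y' \<tau>/(y' \<tau> + y \<tau>) + f \<sigma>2 s * x' \<sigma>2/(x' \<sigma>2 + x \<sigma>2))"
      using B.ystep[OF mt(2)] unfolding x_def x'_def y_def y'_def \<sigma>2_def len .
    have "(1 + \<alpha>*(1-\<delta>)/(6*K))*\<rho>*x' (Suc \<tau>) \<le> x (Suc \<tau>)"
      by (rule final_step[OF pos(1,2,3,4,3,4) rpos alpha less_imp_le[OF A.Fpos] less_imp_le[OF A.Bpos]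
            conjunct1[OF h0] conjunct2[OF h1] conjunct2[OF h2] Bs delta Kpos X1 X1' Wx])
    moreover have "(1 + \<alpha>*(1-\<delta>)/(6*K))*\<rho>*y' (Suc \<tau>) \<le> y (Suc \<tau>)"
      by (rule final_step[OF pos(3,4,1,2,1,2) rpos alpha less_imp_le[OF A.Bpos] less_imp_le[OF A.Fpos]
            conjunct2[OF h0] conjunct1[OF h1] conjunct1[OF h2] Fs delta Kpos Y1 Y1' Wy])
    ultimately show ?thesis unfolding c_def by blast
  qed
  have ind: "(\<forall>j. t - n < j \<and> j \<le> t + k \<longrightarrow> \<rho>*x' j \<le> x j \<and> \<rho>*y' j \<le> y j) \<and>
      (\<forall>j. t < j \<and> j \<le> t + k \<longrightarrow> (1+c)*\<rho>*x' j \<le> x j \<and> (1+c)*\<rho>*y' j \<le> y j)" if "k \<le> n" for k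
    using that
  proof (induction k)
    case 0 thus ?case using window by auto
  next
    case (Suc k)
    hence IH: "\<forall>j. t - n < j \<and> j \<le> t + k \<longrightarrow> \<rho>*x' j \<le> x j \<and> \<rho>*y' j \<le> y j"
      "\<forall>j. t < j \<and> j \<le> t + k \<longrightarrow> (1+c)*\<rho>*x' j \<le> x j \<and> (1+c)*\<rho>*y' j \<le> y j" by auto
    have new: "(1+c)*\<rho>*x' (Suc (t+k)) \<le> x (Suc (t+k)) \<and> (1+c)*\<rho>*y' (Suc (t+k)) \<le> y (Suc (t+k))"
      using step[of "t+k"] IH(1) Suc.prems by auto
    have weak: "\<rho>*x' j \<le> (1+c)*\<rho>*x' j" "\<rho>*y' j \<le> (1+c)*\<rho>*y' j" for j
      using cpos rpos pos[of j] by (simp_all add: algebra_simps)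
    have "\<rho>*x' (Suc (t+k)) \<le> x (Suc (t+k)) \<and> \<rho>*y' (Suc (t+k)) \<le> y (Suc (t+k))"
      using new weak[of "Suc (t+k)"] by linarith
    hence A1: "\<forall>j. t - n < j \<and> j \<le> t + Suc k \<longrightarrow> \<rho>*x' j \<le> x j \<and> \<rho>*y' j \<le> y j"
      using IH(1) by (metis add_Suc_right le_SucE)
    have A2: "\<forall>j. t < j \<and> j \<le> t + Suc k \<longrightarrow> (1+c)*\<rho>*x' j \<le> x j \<and> (1+c)*\<rho>*y' j \<le> y j"
      using IH(2) new by (metis add_Suc_right le_SucE)
    show ?case using A1 A2 by blast
  qed
  have fin: "(1+c)*\<rho>*x' j \<le> x j \<and> (1+c)*\<rho>*y' j \<le> y j" if "t < j" "j \<le> t + n" for j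
    using ind[of n] that by blast
  have "(1+c)*\<rho> \<le> Min (Sset (t+n))"
  proof (subst Min_ge_iff[OF Sfin])
    show "\<forall>a\<in>Sset (t+n). (1+c)*\<rho> \<le> a"
    proof
      fix a assume "a \<in> Sset (t+n)"
      then obtain i where i: "i < n" "a = x (t+n-i)/x' (t+n-i) \<or> a = y (t+n-i)/y' (t+n-i)"
        unfolding Sset_def by auto
      have "t < t+n-i" "t+n-i \<le> t+n" using i by auto
      from fin[OF this] i(2) pos[of "t+n-i"] show "(1+c)*\<rho> \<le> a"
        by (auto simp: pos_le_divide_eq)
    qed
  qed
  thus ?thesis unfolding mn'(4) rmin_eq Sset_def[symmetric] rho_eq[symmetric] c_def K_def
    by (simp add: \<rho>_def algebra_simps)
qed


end
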